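(* Let $\mathcal{D}=(\mathcal{P},\mathcal{B},\mathcal{I})$ be a $(v,b,r,k,\lambda_1,0)$ SPBIBD of type $(k-1,t)$ with $0<t<k$, and let $\Gamma$ be its incidence graph. Then every vertex $p\in\mathcal{P}$ is distance-regularized. Moreover, $\Gamma$ is distance-semiregular with respect to $\mathcal{P}$ with intersection numbers $c_0=0,\ c_1=1,\ c_2=\lambda_1,\ c_3=t,\ c_4=r$; $b_0=r,\ b_1=k-1,\ b_2=r-\lambda_1,\ b_3=k-t,\ b_4=0$.
   Context: A design $\mathcal{D}=(\mathcal{P},\mathcal{B},\mathcal{I})$ is an incidence structure with $|\mathcal{P}|=v$, $|\mathcal{B}|=b$, every block incident with exactly $k$ points and every point with exactly $r$ blocks; standing assumptions: $v>k$ and $r<b$. $(p,B)$ is a flag if $p\in B$, a non-flag otherwise. $\mathcal{D}$ is a $(v,b,r,k,\lambda_1,\lambda_2)$ SPBIBD of type $(s,t)$ if (i) any two distinct points are together in exactly $\lambda_1$ or exactly $\lambda_2$ blocks; (ii) for every flag $(p,B)$, the number of points of $B$ other than $p$ lying with $p$ in exactly $\lambda_1$ blocks is $s$; (iii) for every non-flag $(p,B)$, the number of points of $B$ lying with $p$ in exactly $\lambda_1$ blocks is $t$. The incidence graph is the bipartite graph on $\mathcal{P}\cup\mathcal{B}$ with $p\sim B$ iff $p\in B$. For a connected graph, $\Gamma_i(u)$ is the set of vertices at distance $i$ from $u$, $\Gamma(u)=\Gamma_1(u)$, $\varepsilon(u)$ the eccentricity. For $w\in\Gamma_i(u)$, $b_i(u,w)=|\Gamma_{i+1}(u)\cap\Gamma(w)|$,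 $c_i(u,w)=|\Gamma_{i-1}(u)\cap\Gamma(w)|$, $a_i(u,w)=|\Gamma_i(u)\cap\Gamma(w)|$. $u$ is distance-regularized if for each $0\le i\le\varepsilon(u)$ these do not depend on $w\in\Gamma_i(u)$. A connected $(Y,Y')$-bipartite graph is distance-semiregular with respect to $Y$ if every vertex of $Y$ is distance-regularized with the same numbers $b_i, c_i$ (i.e. $b_i(x,w)=b_i$, $c_i(x,w)=c_i$ for all $x\in Y$, $w\in\Gamma_i(x)$). *)

theory Defs
  imports Main
begin

text \<open>A design with point set P, block set Bs and incidence relation I
(only its restriction to P x Bs matters).\<close>

definition design ::
  "'p set \<Rightarrow> 'b set \<Rightarrow> ('p \<Rightarrow> 'b \<Rightarrow> bool) \<Rightarrow> nat \<Rightarrow> nat \<Rightarrow> nat \<Rightarrow> nat \<Rightarrow> bool" where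
  "design P Bs I v b r k \<longleftrightarrow>
     finite P \<and> finite Bs \<and> card P = v \<and> card Bs = b \<and>
     (\<forall>B\<in>Bs. card {p\<in>P. I p B} = k) \<and>
     (\<forall>p\<in>P. card {B\<in>Bs. I p B} = r) \<and>
     v > k \<and> r < b"

definition conc :: "'p set \<Rightarrow> 'b set \<Rightarrow> ('p \<Rightarrow> 'b \<Rightarrow> bool) \<Rightarrow> 'p \<Rightarrow> 'p \<Rightarrow> nat" where
  "conc P Bs I p q = card {B\<in>Bs. I p B \<and> I q B}"

definition spbibd ::
  "'p set \<Rightarrow> 'b set \<Rightarrow> ('p \<Rightarrow> 'b \<Rightarrow> bool) \<Rightarrow> nat \<Rightarrow> nat \<Rightarrow> nat \<Rightarrow> nat \<Rightarrow> nat \<Rightarrow> nat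
     \<Rightarrow> nat \<Rightarrow> nat \<Rightarrow> bool" where
  "spbibd P Bs I v b r k l1 l2 s t \<longleftrightarrow>
     design P Bs I v b r k \<and>
     (\<forall>p\<in>P. \<forall>q\<in>P. p \<noteq> q \<longrightarrow> conc P Bs I p q = l1 \<or> conc P Bs I p q = l2) \<and>
     (\<forall>p\<in>P. \<forall>B\<in>Bs. I p B \<longrightarrow>
        card {q\<in>P. q \<noteq> p \<and> I q B \<and> conc P Bs I p q = l1} = s) \<and>
     (\<forall>p\<in>P. \<forall>B\<in>Bs. \<not> I p B \<longrightarrow>
        card {q\<in>P. I q B \<and> conc P Bs I p q = l1} = t)"

definition inc_vertices :: "'p set \<Rightarrow> 'b set \<Rightarrow> ('p + 'b) set" where
  "inc_vertices P Bs = Inl ` P \<union> Inr ` Bs"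

fun inc_adj :: "'p set \<Rightarrow> 'b set \<Rightarrow> ('p \<Rightarrow> 'b \<Rightarrow> bool) \<Rightarrow> 'p + 'b \<Rightarrow> 'p + 'b \<Rightarrow> bool" where
  "inc_adj P Bs I (Inl p) (Inr B) = (p \<in> P \<and> B \<in> Bs \<and> I p B)"
| "inc_adj P Bs I (Inr B) (Inl p) = (p \<in> P \<and> B \<in> Bs \<and> I p B)"
| "inc_adj P Bs I _ _ = False"

inductive walk :: "('v \<Rightarrow> 'v \<Rightarrow> bool) \<Rightarrow> nat \<Rightarrow> 'v \<Rightarrow> 'v \<Rightarrow> bool" for adj where
  walk0: "walk adj 0 u u"
| walkS: "adj u x \<Longrightarrow> walk adj n x w \<Longrightarrow> walk adj (Suc n) u w"

definition gconnected :: "'v set \<Rightarrow> ('v \<Rightarrow> 'v \<Rightarrow> bool) \<Rightarrow> bool" where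
  "gconnected V adj \<longleftrightarrow> (\<forall>u\<in>V. \<forall>w\<in>V. \<exists>n. walk adj n u w)"

definition gdist :: "('v \<Rightarrow> 'v \<Rightarrow> bool) \<Rightarrow> 'v \<Rightarrow> 'v \<Rightarrow> nat" where
  "gdist adj u w = (LEAST n. walk adj n u w)"

definition sphere :: "'v set \<Rightarrow> ('v \<Rightarrow> 'v \<Rightarrow> bool) \<Rightarrow> 'v \<Rightarrow> nat \<Rightarrow> 'v set" where
  "sphere V adj u i = {w\<in>V. (\<exists>n. walk adj n u w) \<and> gdist adj u w = i}"

definition nbhd :: "'v set \<Rightarrow> ('v \<Rightarrow> 'v \<Rightarrow> bool) \<Rightarrow> 'v \<Rightarrow> 'v set" where
  "nbhd V adj w = {x\<in>V. adj w x}"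

definition ecc :: "'v set \<Rightarrow> ('v \<Rightarrow> 'v \<Rightarrow> bool) \<Rightarrow> 'v \<Rightarrow> nat" where
  "ecc V adj u = Max (gdist adj u ` V)"

definition bnum :: "'v set \<Rightarrow> ('v \<Rightarrow> 'v \<Rightarrow> bool) \<Rightarrow> 'v \<Rightarrow> 'v \<Rightarrow> nat" where
  "bnum V adj u w = card (sphere V adj u (Suc (gdist adj u w)) \<inter> nbhd V adj w)"

definition cnum :: "'v set \<Rightarrow> ('v \<Rightarrow> 'v \<Rightarrow> bool) \<Rightarrow> 'v \<Rightarrow> 'v \<Rightarrow> nat" where
  "cnum V adj u w =
     (if gdist adj u w = 0 then 0
      else card (sphere V adj u (gdist adj u w - 1) \<inter> nbhd V adj w))"

definition anum :: "'v set \<Rightarrow> ('v \<Rightarrow> 'v \<Rightarrow> bool) \<Rightarrow> 'v \<Rightarrow> 'v \<Rightarrow> nat" where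
  "anum V adj u w = card (sphere V adj u (gdist adj u w) \<inter> nbhd V adj w)"

definition distance_regularized :: "'v set \<Rightarrow> ('v \<Rightarrow> 'v \<Rightarrow> bool) \<Rightarrow> 'v \<Rightarrow> bool" where
  "distance_regularized V adj u \<longleftrightarrow>
     (\<forall>i \<le> ecc V adj u. \<forall>w\<in>sphere V adj u i. \<forall>w'\<in>sphere V adj u i.
        bnum V adj u w = bnum V adj u w' \<and> cnum V adj u w = cnum V adj u w' \<and>
        anum V adj u w = anum V adj u w')"

definition distance_semiregular ::
  "'v set \<Rightarrow> ('v \<Rightarrow> 'v \<Rightarrow> bool) \<Rightarrow> 'v set \<Rightarrow> (nat \<Rightarrow> nat) \<Rightarrow> (nat \<Rightarrow> nat) \<Rightarrow> bool" where
  "distance_semiregular V adj Y bs cs \<longleftrightarrow>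
     gconnected V adj \<and> Y \<subseteq> V \<and>
     (\<forall>x\<in>Y. distance_regularized V adj x \<and>
        (\<forall>i \<le> ecc V adj x. \<forall>w\<in>sphere V adj x i.
           bnum V adj x w = bs i \<and> cnum V adj x w = cs i))"

end

theory Submission
  imports Defs
begin

lemma walk_snoc: "walk adj n u w \<Longrightarrow> adj w x \<Longrightarrow> walk adj (Suc n) u x"
  by (induction rule: walk.induct) (auto intro: walk.intros)

lemma walk_rev: "walk adj n u w \<Longrightarrow> (\<And>a c. adj a c \<Longrightarrow> adj c a) \<Longrightarrow> walk adj n w u"
  by (induction rule: walk.induct) (auto intro: walk.intros walk_snoc)

lemma walk_app: "walk adj n u w \<Longrightarrow> walk adj m w x \<Longrightarrow> walk adj (n + m) u x"
  by (induction rule: walk.induct) (auto intro: walk.intros)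

lemma inc_adj_sym: "inc_adj P Bs I a c \<Longrightarrow> inc_adj P Bs I c a"
  by (cases a; cases c) auto

definition coll :: "'b set \<Rightarrow> ('p \<Rightarrow> 'b \<Rightarrow> bool) \<Rightarrow> 'p \<Rightarrow> 'p \<Rightarrow> bool" where
  "coll Bs I p q \<longleftrightarrow> (\<exists>B\<in>Bs. I p B \<and> I q B)"

definition dd :: "'b set \<Rightarrow> ('p \<Rightarrow> 'b \<Rightarrow> bool) \<Rightarrow> 'p \<Rightarrow> 'p + 'b \<Rightarrow> nat" where
  "dd Bs I p w = (case w of Inl q \<Rightarrow> if q = p then 0 else if coll Bs I p q then 2 else 4
                  | Inr B \<Rightarrow> if I p B then 1 else 3)"

lemma dd_le4: "dd Bs I p w \<le> 4"
  by (auto simp: dd_def split: sum.splits)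

lemma dd_lip: "inc_adj P Bs I u x \<Longrightarrow> dd Bs I p x \<le> dd Bs I p u + 1"
  apply (cases u; cases x)
  using dd_le4[of Bs I p] by (auto simp: dd_def coll_def)

lemma walk_lower: "walk (inc_adj P Bs I) n x w \<Longrightarrow> dd Bs I p w \<le> dd Bs I p x + n"
proof (induction rule: walk.induct)
  case (walk0 u) then show ?case by simp
next
  case (walkS u x n w)
  then show ?case using dd_lip[OF walkS(1), of p] by simp
qed

lemma card_img:
  assumes "inj f" "f ` S \<subseteq> V"
  shows "card ({x\<in>V. Q x} \<inter> f ` S) = card {y\<in>S. Q (f y)}"
proof -
  have "{x\<in>V. Q x} \<inter> f ` S = f ` {y\<in>S. Q (f y)}" using assms(2) by auto
  then show ?thesis using assms(1) by (simp add: card_image inj_on_def inj_def)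
qed

locale spb =
  fixes P :: "'p set" and Bs :: "'b set" and I :: "'p \<Rightarrow> 'b \<Rightarrow> bool"
    and v b r k l1 t :: nat
  assumes sp: "spbibd P Bs I v b r k l1 0 (k - 1) t"
    and tpos: "0 < t" and tk: "t < k"
begin

abbreviation "V \<equiv> inc_vertices P Bs"
abbreviation "A \<equiv> inc_adj P Bs I"

lemma dsg: "design P Bs I v b r k" using sp by (simp add: spbibd_def)

lemma finP: "finite P" using dsg by (simp add: design_def)
lemma finB: "finite Bs" using dsg by (simp add: design_def)
lemma cardB: "card Bs = b" using dsg by (simp add: design_def)
lemma blk: "B \<in> Bs \<Longrightarrow> card {p\<in>P. I p B} = k" using dsg by (simp add: design_def)
lemma rep: "p \<in> P \<Longrightarrow> card {B\<in>Bs. I p B} = r" using dsg by (simp add: design_def)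
lemma rb: "r < b" using dsg by (simp add: design_def)
lemma dich: assumes "p \<in> P" "q \<in> P" "p \<noteq> q" shows "conc P Bs I p q = l1 \<or> conc P Bs I p q = 0"
  using sp assms by (simp add: spbibd_def)
lemma tt: assumes "p \<in> P" "B \<in> Bs" "\<not> I p B" shows "card {q\<in>P. I q B \<and> conc P Bs I p q = l1} = t"
  using sp assms by (simp add: spbibd_def)
lemma P_ne: "P \<noteq> {}" using dsg by (auto simp: design_def)

lemma finV: "finite V" using finP finB by (simp add: inc_vertices_def)

lemma conc_pos: "conc P Bs I p q > 0 \<longleftrightarrow> coll Bs I p q"
  unfolding conc_def coll_def using finB by (auto simp: card_gt_0_iff)

lemma Bs_ne: "Bs \<noteq> {}" using rb cardB by auto

lemma l1_pos: "l1 > 0"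
proof -
  obtain B where B: "B \<in> Bs" using Bs_ne by auto
  let ?S = "{p\<in>P. I p B}"
  have fS: "finite ?S" using finP by simp
  have c: "card ?S = k" using blk[OF B] .
  then have "?S \<noteq> {}" using tk by (metis card.empty not_less_zero)
  then obtain x where x: "x \<in> ?S" by auto
  have "card (?S - {x}) = k - 1" using c x fS by simp
  moreover have "k - 1 > 0" using tk tpos by simp
  ultimately have "?S - {x} \<noteq> {}" by (metis card.empty less_irrefl)
  then obtain y where y: "y \<in> ?S" "y \<noteq> x" by auto
  have "coll Bs I x y" using x y B by (auto simp: coll_def)
  then have "conc P Bs I x y > 0" using conc_pos by blast
  then show ?thesis using dich[of x y] x y by auto
qed

lemma coll_iff: "p \<in> P \<Longrightarrow> q \<in> P \<Longrightarrow> p \<noteq> q \<Longrightarrow> coll Bs I p q \<longleftrightarrow> conc P Bs I p q = l1"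
  using dich[of p q] conc_pos[of p q] l1_pos by auto

lemma nonflag_coll: "p \<in> P \<Longrightarrow> B \<in> Bs \<Longrightarrow> \<not> I p B \<Longrightarrow> \<exists>q\<in>P. I q B \<and> q \<noteq> p \<and> coll Bs I p q"
proof -
  assume a: "p \<in> P" "B \<in> Bs" "\<not> I p B"
  have "card {q\<in>P. I q B \<and> conc P Bs I p q = l1} = t" using tt a by blast
  then have "{q\<in>P. I q B \<and> conc P Bs I p q = l1} \<noteq> {}" using tpos by (metis card.empty less_irrefl)
  then obtain q where "q \<in> P" "I q B" "conc P Bs I p q = l1" by auto
  then show ?thesis using a coll_iff[of p q] by auto
qed

lemma in_block: "p \<in> P \<Longrightarrow> \<exists>B\<in>Bs. I p B"
proof -
  assume p: "p \<in> P"
  obtain B where B: "B \<in> Bs" using Bs_ne by auto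
  show ?thesis
  proof (cases "I p B")
    case True then show ?thesis using B by auto
  next
    case False
    then obtain q where "coll Bs I p q" using nonflag_coll[OF p B] by auto
    then show ?thesis by (auto simp: coll_def)
  qed
qed

lemma far_exists: "p \<in> P \<Longrightarrow> \<exists>q\<in>P. q \<noteq> p \<and> \<not> coll Bs I p q"
proof -
  assume p: "p \<in> P"
  have "{B\<in>Bs. I p B} \<noteq> Bs" using rep[OF p] rb cardB by auto
  then obtain B where B: "B \<in> Bs" "\<not> I p B" by auto
  have c1: "card {q\<in>P. I q B \<and> conc P Bs I p q = l1} = t" using tt p B by blast
  have c2: "card {q\<in>P. I q B} = k" using blk B by blast
  have "\<not> {q\<in>P. I q B} \<subseteq> {q\<in>P. I q B \<and> conc P Bs I p q = l1}"
  proof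
    assume sub: "{q\<in>P. I q B} \<subseteq> {q\<in>P. I q B \<and> conc P Bs I p q = l1}"
    have "card {q\<in>P. I q B} \<le> card {q\<in>P. I q B \<and> conc P Bs I p q = l1}"
      using finP by (intro card_mono[OF _ sub]) simp
    then have "k \<le> t" using c1 c2 by simp
    then show False using tk by simp
  qed
  then obtain q where q: "q \<in> P" "I q B" "conc P Bs I p q \<noteq> l1" by auto
  then have "q \<noteq> p" using B by auto
  then show ?thesis using q coll_iff[OF p q(1)] by auto
qed

lemma walk_up: assumes p: "p \<in> P" and w: "w \<in> V" shows "walk A (dd Bs I p w) (Inl p) w"
proof -
  have w1: "walk A 1 (Inl p) (Inr B)" if "B \<in> Bs" "I p B" for B
    using p that walk_snoc[OF walk0, of A "Inl p" "Inr B"] by simp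
  have w2: "walk A 2 (Inl p) (Inl q)" if qq: "q \<in> P" "coll Bs I p q" for q
  proof -
    obtain B where "B \<in> Bs" "I p B" "I q B" using qq by (auto simp: coll_def)
    then show ?thesis using w1 walk_snoc[of A 1 "Inl p" "Inr B" "Inl q"] qq
      by (simp add: numeral_2_eq_2)
  qed
  have w3: "walk A 3 (Inl p) (Inr B)" if bb: "B \<in> Bs" "\<not> I p B" for B
  proof -
    obtain q where "q \<in> P" "I q B" "coll Bs I p q" using nonflag_coll[OF p bb] by auto
    then show ?thesis using w2 walk_snoc[of A 2 "Inl p" "Inl q" "Inr B"] bb
      by (simp add: numeral_3_eq_3 numeral_2_eq_2)
  qed
  have w4: "walk A 4 (Inl p) (Inl q)" if qq: "q \<in> P" "q \<noteq> p" "\<not> coll Bs I p q" for q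
  proof -
    obtain B where B: "B \<in> Bs" "I q B" using in_block[OF qq(1)] by auto
    then have "\<not> I p B" using qq by (auto simp: coll_def)
    then show ?thesis using w3[OF B(1)] walk_snoc[of A 3 "Inl p" "Inr B" "Inl q"] qq B
      by (simp add: numeral_3_eq_3 eval_nat_numeral)
  qed
  show ?thesis
  proof (cases w)
    case (Inl q)
    then show ?thesis using w w2 w4 by (auto simp: inc_vertices_def dd_def intro: walk0)
  next
    case (Inr B)
    then have B: "B \<in> Bs" using w by (auto simp: inc_vertices_def)
    show ?thesis
    proof (cases "I p B")
      case True then show ?thesis using w1[OF B True] Inr by (simp add: dd_def)
    next
      case False then show ?thesis using w3[OF B False] Inr by (simp add: dd_def)
    qed
  qed
qed

lemma gdist_eq: assumes p: "p \<in> P" and w: "w \<in> V" shows "gdist A (Inl p) w = dd Bs I p w"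
  unfolding gdist_def
proof (rule Least_equality)
  show "walk A (dd Bs I p w) (Inl p) w" using walk_up[OF p w] .
next
  fix n assume "walk A n (Inl p) w"
  from walk_lower[OF this, of p] show "dd Bs I p w \<le> n" by (simp add: dd_def)
qed

lemma sphere_eq: "p \<in> P \<Longrightarrow> sphere V A (Inl p) i = {w\<in>V. dd Bs I p w = i}"
  unfolding sphere_def by (auto dest: walk_up gdist_eq)

lemma nbhd_l: "q \<in> P \<Longrightarrow> nbhd V A (Inl q) = Inr ` {B\<in>Bs. I q B}"
  unfolding nbhd_def inc_vertices_def by (auto elim: inc_adj.elims)

lemma nbhd_r: "B \<in> Bs \<Longrightarrow> nbhd V A (Inr B) = Inl ` {q\<in>P. I q B}"
  unfolding nbhd_def inc_vertices_def by (auto elim: inc_adj.elims)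


lemma img_l: "Inl ` S \<subseteq> V" if "S \<subseteq> P" using that by (auto simp: inc_vertices_def)
lemma img_r: "Inr ` S \<subseteq> V" if "S \<subseteq> Bs" using that by (auto simp: inc_vertices_def)

lemma cl: "q \<in> P \<Longrightarrow> card ({x\<in>V. Q x} \<inter> nbhd V A (Inl q)) = card {B\<in>{B\<in>Bs. I q B}. Q (Inr B)}"
  by (simp only: nbhd_l, rule card_img) (auto simp: inc_vertices_def)

lemma cr: "B \<in> Bs \<Longrightarrow> card ({x\<in>V. Q x} \<inter> nbhd V A (Inr B)) = card {q\<in>{q\<in>P. I q B}. Q (Inl q)}"
  by (simp only: nbhd_r, rule card_img) (auto simp: inc_vertices_def)

lemma nums:
  assumes p: "p \<in> P" and w: "w \<in> V"
  shows "bnum V A (Inl p) w = [r, k - 1, r - l1, k - t, 0] ! dd Bs I p w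
       \<and> cnum V A (Inl p) w = [0, 1, l1, t, r] ! dd Bs I p w
       \<and> anum V A (Inl p) w = 0"
proof -
  let ?d = "dd Bs I p"
  have bn: "bnum V A (Inl p) w = card ({x\<in>V. ?d x = Suc (?d w)} \<inter> nbhd V A w)"
    by (simp add: bnum_def gdist_eq[OF p w] sphere_eq[OF p])
  have cn: "cnum V A (Inl p) w = (if ?d w = 0 then 0 else card ({x\<in>V. ?d x = ?d w - 1} \<inter> nbhd V A w))"
    by (simp add: cnum_def gdist_eq[OF p w] sphere_eq[OF p])
  have an: "anum V A (Inl p) w = card ({x\<in>V. ?d x = ?d w} \<inter> nbhd V A w)"
    by (simp add: anum_def gdist_eq[OF p w] sphere_eq[OF p])
  show ?thesis
  proof (cases w)
    case (Inl q)
    then have q: "q \<in> P" using w by (auto simp: inc_vertices_def)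
    have a0: "anum V A (Inl p) w = 0"
    proof -
      have e: "{B\<in>Bs. I q B \<and> ?d (Inr B) = ?d (Inl q)} = {}" by (auto simp: dd_def)
      have "anum V A (Inl p) w = card {B\<in>Bs. I q B \<and> ?d (Inr B) = ?d (Inl q)}"
        using an cl[OF q] Inl by simp
      then show ?thesis by (simp only: e card.empty)
    qed
    show ?thesis
    proof (cases "q = p")
      case True
      have dw: "?d w = 0" using Inl True by (simp add: dd_def)
      have "{B\<in>{B\<in>Bs. I q B}. ?d (Inr B) = Suc (?d w)} = {B\<in>Bs. I p B}"
        using True dw by (auto simp: dd_def)
      then have "bnum V A (Inl p) w = r" using bn cl[OF q] Inl rep[OF p] by simp
      then show ?thesis using dw cn a0 by simp
    next
      case False
      show ?thesis
      proof (cases "coll Bs I p q")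
        case True
        have dw: "?d w = 2" using Inl True False by (simp add: dd_def)
        have e1: "{B\<in>{B\<in>Bs. I q B}. ?d (Inr B) = Suc (?d w)} = {B\<in>Bs. I q B} - {B\<in>Bs. I p B \<and> I q B}"
          using dw by (auto simp: dd_def)
        have cc: "card {B\<in>Bs. I p B \<and> I q B} = l1"
          using coll_iff[OF p q] True False by (simp add: conc_def)
        have "card ({B\<in>Bs. I q B} - {B\<in>Bs. I p B \<and> I q B}) = r - l1"
          using card_Diff_subset[of "{B\<in>Bs. I p B \<and> I q B}" "{B\<in>Bs. I q B}"] finB cc rep[OF q]
          by (simp add: Collect_mono_iff)
        then have b: "bnum V A (Inl p) w = r - l1" using bn cl[OF q] Inl e1 by simp
        have e2: "{B\<in>{B\<in>Bs. I q B}. ?d (Inr B) = ?d w - 1} = {B\<in>Bs. I p B \<and> I q B}"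
          using dw by (auto simp: dd_def)
        have "cnum V A (Inl p) w = l1" using cn cl[OF q] Inl e2 cc dw by simp
        then show ?thesis using b dw a0 by simp
      next
        case nc: False
        have dw: "?d w = 4" using Inl nc False by (simp add: dd_def)
        have e1: "{B\<in>{B\<in>Bs. I q B}. ?d (Inr B) = Suc (?d w)} = {}"
          using dw by (auto simp: dd_def)
        have e2: "{B\<in>{B\<in>Bs. I q B}. ?d (Inr B) = ?d w - 1} = {B\<in>Bs. I q B}"
          using dw nc by (auto simp: dd_def coll_def)
        have cr4: "cnum V A (Inl p) w = r" using cn cl[OF q] Inl e2 dw rep[OF q] by simp
        have e1': "{B\<in>Bs. I q B \<and> ?d (Inr B) = Suc (?d (Inl q))} = {}"
          using e1 Inl by simp
        have "bnum V A (Inl p) w = card {B\<in>Bs. I q B \<and> ?d (Inr B) = Suc (?d (Inl q))}"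
          using bn cl[OF q] Inl by simp
        then have "bnum V A (Inl p) w = 0" by (simp only: e1' card.empty)
        then show ?thesis using dw a0 cr4 by simp
      qed
    qed
  next
    case (Inr B)
    then have B: "B \<in> Bs" using w by (auto simp: inc_vertices_def)
    have a0: "anum V A (Inl p) w = 0"
    proof -
      have e: "{q\<in>P. I q B \<and> ?d (Inl q) = ?d (Inr B)} = {}" by (auto simp: dd_def)
      have "anum V A (Inl p) w = card {q\<in>P. I q B \<and> ?d (Inl q) = ?d (Inr B)}"
        using an cr[OF B] Inr by simp
      then show ?thesis by (simp only: e card.empty)
    qed
    show ?thesis
    proof (cases "I p B")
      case True
      have dw: "?d w = 1" using Inr True by (simp add: dd_def)
      have e1: "{q\<in>{q\<in>P. I q B}. ?d (Inl q) = Suc (?d w)} = {q\<in>P. I q B} - {p}"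
        using dw True B by (auto simp: dd_def coll_def)
      have "card ({q\<in>P. I q B} - {p}) = k - 1" using blk[OF B] finP p True by simp
      then have b: "bnum V A (Inl p) w = k - 1" using bn cr[OF B] Inr e1 by simp
      have e2: "{q\<in>{q\<in>P. I q B}. ?d (Inl q) = ?d w - 1} = {p}"
        using dw True p by (auto simp: dd_def split: if_splits)
      have "cnum V A (Inl p) w = 1" using cn cr[OF B] Inr e2 dw by simp
      then show ?thesis using b dw a0 by simp
    next
      case False
      have dw: "?d w = 3" using Inr False by (simp add: dd_def)
      have ct: "{q\<in>P. I q B \<and> conc P Bs I p q = l1} = {q\<in>P. I q B \<and> coll Bs I p q}"
        using coll_iff[OF p] False by blast
      have e2: "{q\<in>{q\<in>P. I q B}. ?d (Inl q) = ?d w - 1} = {q\<in>P. I q B \<and> coll Bs I p q}"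
        using dw False by (auto simp: dd_def)
      have c: "cnum V A (Inl p) w = t" using cn cr[OF B] Inr e2 dw tt[OF p B False] ct by simp
      have e1: "{q\<in>{q\<in>P. I q B}. ?d (Inl q) = Suc (?d w)} = {q\<in>P. I q B} - {q\<in>P. I q B \<and> coll Bs I p q}"
        using dw False by (auto simp: dd_def)
      have "card ({q\<in>P. I q B} - {q\<in>P. I q B \<and> coll Bs I p q}) = k - t"
        using card_Diff_subset[of "{q\<in>P. I q B \<and> coll Bs I p q}" "{q\<in>P. I q B}"] finP
          blk[OF B] tt[OF p B False] ct
        by (simp add: Collect_mono_iff)
      then have "bnum V A (Inl p) w = k - t" using bn cr[OF B] Inr e1 by simp
      then show ?thesis using c dw a0 by simp
    qed
  qed
qed

lemma ecc4: assumes p: "p \<in> P" shows "ecc V A (Inl p) = 4"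
proof -
  obtain q where q: "q \<in> P" "q \<noteq> p" "\<not> coll Bs I p q" using far_exists[OF p] by auto
  have qV: "Inl q \<in> V" using q by (simp add: inc_vertices_def)
  have "gdist A (Inl p) ` V = dd Bs I p ` V" using gdist_eq[OF p] by (simp add: image_def)
  moreover have "Max (dd Bs I p ` V) = 4"
  proof (rule Max_eqI)
    show "finite (dd Bs I p ` V)" using finV by simp
    show "\<And>y. y \<in> dd Bs I p ` V \<Longrightarrow> y \<le> 4" using dd_le4 by auto
    show "4 \<in> dd Bs I p ` V" using qV q by (force simp: dd_def)
  qed
  ultimately show ?thesis by (simp add: ecc_def)
qed

lemma conn: "gconnected V A"
  unfolding gconnected_def
proof (intro ballI)
  fix u w assume u: "u \<in> V" and w: "w \<in> V"
  obtain p where p: "p \<in> P" using P_ne by auto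
  have "walk A (dd Bs I p u) u (Inl p)" using walk_rev[OF walk_up[OF p u]] inc_adj_sym by metis
  then show "\<exists>n. walk A n u w" using walk_app[OF _ walk_up[OF p w]] by blast
qed
end

theorem lemma4p2:
  fixes P :: "'p set" and Bs :: "'b set" and I :: "'p \<Rightarrow> 'b \<Rightarrow> bool"
    and v b r k l1 t :: nat
  assumes "spbibd P Bs I v b r k l1 0 (k - 1) t"
    and "0 < t" and "t < k"
  shows "(\<forall>p\<in>P. distance_regularized (inc_vertices P Bs) (inc_adj P Bs I) (Inl p))
       \<and> distance_semiregular (inc_vertices P Bs) (inc_adj P Bs I) (Inl ` P)
           (\<lambda>i. [r, k - 1, r - l1, k - t, 0] ! i) (\<lambda>i. [0, 1, l1, t, r] ! i)
       \<and> (\<forall>p\<in>P. ecc (inc_vertices P Bs) (inc_adj P Bs I) (Inl p) = 4)"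
proof -
  interpret spb P Bs I v b r k l1 t by unfold_locales (rule assms)+
  have DR: "distance_regularized V A (Inl p)" if p: "p \<in> P" for p
    unfolding distance_regularized_def
  proof (intro allI impI ballI)
    fix i w w' assume "w \<in> sphere V A (Inl p) i" "w' \<in> sphere V A (Inl p) i"
    then have w: "w \<in> V" "dd Bs I p w = i" and w': "w' \<in> V" "dd Bs I p w' = i"
      using sphere_eq[OF p] by auto
    show "bnum V A (Inl p) w = bnum V A (Inl p) w' \<and> cnum V A (Inl p) w = cnum V A (Inl p) w' \<and>
        anum V A (Inl p) w = anum V A (Inl p) w'"
      using nums[OF p w(1)] nums[OF p w'(1)] w(2) w'(2) by simp
  qed
  have SR: "distance_semiregular V A (Inl ` P)
           (\<lambda>i. [r, k - 1, r - l1, k - t, 0] ! i) (\<lambda>i. [0, 1, l1, t, r] ! i)"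
    unfolding distance_semiregular_def
  proof (intro conjI ballI)
    show "gconnected V A" by (rule conn)
    show "Inl ` P \<subseteq> V" by (auto simp: inc_vertices_def)
    fix x :: "'p + 'b" assume "x \<in> Inl ` P"
    then obtain p where p: "p \<in> P" and x: "x = Inl p" by auto
    show "distance_regularized V A x" using DR[OF p] x by simp
    show "\<forall>i\<le>ecc V A x. \<forall>w\<in>sphere V A x i.
          bnum V A x w = [r, k - 1, r - l1, k - t, 0] ! i \<and> cnum V A x w = [0, 1, l1, t, r] ! i"
    proof (intro allI impI ballI)
      fix i w assume "w \<in> sphere V A x i"
      then have w: "w \<in> V" "dd Bs I p w = i" using sphere_eq[OF p] x by auto
      show "bnum V A x w = [r, k - 1, r - l1, k - t, 0] ! i \<and> cnum V A x w = [0, 1, l1, t, r] ! i"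
        using nums[OF p w(1)] w(2) x by simp
    qed
  qed
  show ?thesis using DR SR ecc4 by blast
qed

end
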